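(* There are infinitely many coprime pairs $(r,s)$ of integers $r,s\geq2$ such that $2c_{r,s}=c_{p,q}$ for some coprime integers $p,q\geq2$; that is, infinitely many of the rational vertex algebras $(\mathcal{L}_{c_{r,s}}^{\otimes 2})^{S_2}$ have a minimal (Virasoro) central charge. Likewise, there are infinitely many coprime pairs $(r,s)$, $r,s\ge2$, such that $3c_{r,s}=c_{p,q}$ for some coprime integers $p,q\geq 2$; that is, infinitely many of the vertex algebras $(\mathcal{L}_{c_{r,s}}^{\otimes 3})^{\mathbb{Z}_3}$ have a minimal central charge.
   Context: For coprime integers $p,q\geq2$, $c_{p,q}=1-\frac{6(p-q)^2}{pq}$ (a minimal central charge). $\mathcal{L}_c$ is the simple Virasoro vertex operator algebra of central charge $c$; $(\mathcal{L}_c^{\otimes 2})^{S_2}$ and $(\mathcal{L}_c^{\otimes 3})^{\mathbb{Z}_3}$ are the fixed-point subalgebras under permutation of tensor factors (resp. cyclic permutation), with central charges $2c$ and $3c$. *)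

theory Defs
  imports Complex_Main
begin

definition cmin :: "int \<Rightarrow> int \<Rightarrow> rat" where
  "cmin p q = 1 - of_int (6 * (p - q)^2) / of_int (p * q)"

definition minpair :: "int \<Rightarrow> int \<Rightarrow> bool" where
  "minpair p q \<longleftrightarrow> p \<ge> 2 \<and> q \<ge> 2 \<and> coprime p q"

end

theory Submission
  imports Defs
begin


definition fE :: "rat \<Rightarrow> rat \<Rightarrow> rat \<Rightarrow> rat \<Rightarrow> rat" where
  "fE a b c x = x^3 + a*x^2 + b*x + c"

lemma chord:
  assumes h1: "y1^2 = fE a b c x1" and h2: "y2^2 = fE a b c x2" and ne: "x1 \<noteq> x2"
  shows "((y1 - y2)/(x1 - x2) * (x1 - (((y1 - y2)/(x1 - x2))^2 - a - x1 - x2)) - y1)^2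
         = fE a b c (((y1 - y2)/(x1 - x2))^2 - a - x1 - x2)"
proof -
  define s where "s = (y1 - y2)/(x1 - x2)"
  define x3 where "x3 = s^2 - a - x1 - x2"
  define D where "D = (\<lambda>x. fE a b c x - (y1 + s*(x - x1))^2 - (x-x1)*(x-x2)*(x-x3))"
  have id: "D x3 * (x1 - x2) = D x1 * (x3 - x2) - D x2 * (x3 - x1)"
    unfolding D_def fE_def x3_def by algebra
  have hs: "s * (x1 - x2) = y1 - y2" using ne unfolding s_def by simp
  have d1: "D x1 = 0" unfolding D_def using h1 by simp
  have "y1 + s*(x2 - x1) = y2" using hs by (simp add: algebra_simps)
  hence d2: "D x2 = 0" unfolding D_def using h2 by simp
  have "D x3 = 0" using id d1 d2 ne by simp
  hence "fE a b c x3 = (y1 + s*(x3 - x1))^2" unfolding D_def by simp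
  also have "\<dots> = (s*(x1 - x3) - y1)^2" by (simp add: power2_eq_square algebra_simps)
  finally show ?thesis unfolding s_def x3_def by simp
qed

lemma tangent:
  assumes h1: "y1^2 = fE a b c x1" and ne: "y1 \<noteq> 0"
  defines "s \<equiv> (3*x1^2 + 2*a*x1 + b)/(2*y1)"
  shows "(s * (x1 - (s^2 - a - 2*x1)) - y1)^2 = fE a b c (s^2 - a - 2*x1)"
proof -
  define x3 where "x3 = s^2 - a - 2*x1"
  define D where "D = (\<lambda>x. fE a b c x - (y1 + s*(x - x1))^2 - (x-x1)^2*(x-x3))"
  have id: "D x3 = D x1 + (x3 - x1) * ((3*x1^2 + 2*a*x1 + b) - 2*s*y1)"
    unfolding D_def fE_def x3_def by (simp add: power2_eq_square power3_eq_cube algebra_simps)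
  have hs: "2*s*y1 = 3*x1^2 + 2*a*x1 + b" using ne unfolding s_def by simp
  have d1: "D x1 = 0" unfolding D_def using h1 by simp
  have "D x3 = 0" using id d1 hs by simp
  hence "fE a b c x3 = (y1 + s*(x3 - x1))^2" unfolding D_def by simp
  also have "\<dots> = (s*(x1 - x3) - y1)^2" by (simp add: power2_eq_square algebra_simps)
  finally show ?thesis unfolding x3_def by simp
qed

definition D2 :: "nat \<Rightarrow> rat \<Rightarrow> bool" where
  "D2 j x \<longleftrightarrow> (\<exists>A B::int. odd A \<and> odd B \<and> x = of_int A / (4^j * of_int B))"

lemma D2_unique_aux:
  fixes A B A' B' :: int
  assumes "odd A" "odd B" "odd A'" "odd B'" "j < k"
    and eq: "A * 4^k * B' = A' * 4^j * B"
  shows False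
proof -
  have "(4::int)^k = 4^j * 4^(k-j)" using \<open>j<k\<close> by (simp flip: power_add)
  with eq have "4^j * (A * 4^(k-j) * B') = 4^j * (A' * B)" by (simp add: algebra_simps)
  hence "A * 4^(k-j) * B' = A' * B" by simp
  moreover have "even (A * 4^(k-j) * B')" using \<open>j<k\<close> by simp
  moreover have "odd (A' * B)" using assms by simp
  ultimately show False by simp
qed

lemma D2_unique: assumes "D2 j x" "D2 k x" shows "j = k"
proof -
  obtain A B where ab: "odd A" "odd B" "x = of_int A / (4^j * of_int B)" using assms(1) D2_def by auto
  obtain A' B' where ab': "odd A'" "odd B'" "x = of_int A' / (4^k * of_int B')" using assms(2) D2_def by auto
  have B0: "(of_int B::rat) \<noteq> 0" "(of_int B'::rat) \<noteq> 0" using ab ab' by (auto dest!: odd_pos)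
  from ab(3) ab'(3) have "(of_int A::rat) / (4^j * of_int B) = of_int A' / (4^k * of_int B')" by simp
  hence "(of_int A::rat) * (4^k * of_int B') = of_int A' * (4^j * of_int B)"
    using B0 by (simp add: field_simps)
  hence "of_int (A * 4^k * B') = (of_int (A' * 4^j * B) :: rat)" by (simp add: algebra_simps)
  hence eq: "A * 4^k * B' = A' * 4^j * B" by (simp only: of_int_eq_iff)
  show ?thesis
  proof (rule ccontr)
    assume "j \<noteq> k"
    hence "j < k \<or> k < j" by auto
    thus False
    proof
      assume "j < k" thus False using D2_unique_aux[OF ab(1,2) ab'(1,2) _ eq] by blast
    next
      assume "k < j" thus False using D2_unique_aux[OF ab'(1,2) ab(1,2) _ eq[symmetric]] by blast
    qed
  qed
qed

lemma double_D2:
  fixes a b c :: int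
  assumes hy: "y^2 = fE (of_int a) (of_int b) (of_int c) x" and hD: "D2 j x" and j1: "j \<ge> 1"
  shows "\<exists>x' y'. y'^2 = fE (of_int a) (of_int b) (of_int c) x' \<and> D2 (Suc j) x'"
proof -
  obtain A B where ab: "odd A" "odd B" "x = of_int A / (4^j * of_int B)" using hD D2_def by auto
  define Dn :: int where "Dn = 4^j * B"
  have Dn_even: "even Dn" using j1 unfolding Dn_def by (cases j) auto
  have Dn0: "Dn \<noteq> 0" using ab(2) unfolding Dn_def by auto
  have xD: "x = of_int A / of_int Dn" using ab(3) unfolding Dn_def by simp
  define F' :: int where "F' = A^3 + a*A^2*Dn + b*A*Dn^2 + c*Dn^3"
  define A' :: int where "A' = A^4 - 2*b*A^2*Dn^2 - 8*c*A*Dn^3 + (b^2 - 4*a*c)*Dn^4"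
  have F'odd: "odd F'"
  proof -
    have "F' = A^3 + Dn * (a*A^2 + b*A*Dn + c*Dn^2)" unfolding F'_def by (simp add: algebra_simps power2_eq_square power3_eq_cube)
    thus ?thesis using Dn_even ab(1) by simp
  qed
  have A'odd: "odd A'"
  proof -
    have "A' = A^4 + Dn * (- 2*b*A^2*Dn - 8*c*A*Dn^2 + (b^2 - 4*a*c)*Dn^3)"
      unfolding A'_def by (simp add: algebra_simps power2_eq_square power3_eq_cube power4_eq_xxxx)
    thus ?thesis using Dn_even ab(1) by simp
  qed
  have Dnr: "(of_int Dn :: rat) \<noteq> 0" using Dn0 by simp
  have fx: "fE (of_int a) (of_int b) (of_int c) x * of_int Dn ^ 3 = of_int F'"
    unfolding xD fE_def F'_def using Dnr by (simp add: field_simps power2_eq_square power3_eq_cube)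
  define Nx where "Nx = x^4 - 2*of_int b*x^2 - 8*of_int c*x + (of_int b)^2 - 4*of_int a*of_int c"
  have Nx: "Nx * of_int Dn ^ 4 = of_int A'"
    unfolding xD Nx_def A'_def using Dnr by (simp add: field_simps power2_eq_square power3_eq_cube power4_eq_xxxx)
  have F'0: "F' \<noteq> 0" using F'odd by auto
  have f0: "fE (of_int a) (of_int b) (of_int c) x \<noteq> 0" using fx F'0 by auto
  have y0: "y \<noteq> 0" using hy f0 by auto
  define s where "s = (3*x^2 + 2*of_int a*x + of_int b)/(2*y)"
  define x3 where "x3 = s^2 - of_int a - 2*x"
  have on: "(s * (x - x3) - y)^2 = fE (of_int a) (of_int b) (of_int c) x3"
    using tangent[OF hy y0] unfolding s_def x3_def by simp
  have s2: "s^2 = (3*x^2 + 2*of_int a*x + of_int b)^2/(4*fE (of_int a) (of_int b) (of_int c) x)"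
    unfolding s_def using hy by (simp add: power_divide power_mult_distrib)
  have "x3 = ((3*x^2 + 2*of_int a*x + of_int b)^2 - 4*(of_int a + 2*x)*fE (of_int a) (of_int b) (of_int c) x)
             /(4*fE (of_int a) (of_int b) (of_int c) x)"
    unfolding x3_def s2 using f0 by (simp add: field_simps)
  also have "(3*x^2 + 2*of_int a*x + of_int b)^2 - 4*(of_int a + 2*x)*fE (of_int a) (of_int b) (of_int c) x = Nx"
    unfolding Nx_def fE_def by (simp add: algebra_simps power2_eq_square power3_eq_cube power4_eq_xxxx)
  finally have x3N: "x3 = Nx / (4 * fE (of_int a) (of_int b) (of_int c) x)" .
  have "x3 = of_int A' / (4^(Suc j) * of_int (B*F'))"
  proof -
    have "Nx = of_int A' / of_int Dn ^ 4" using Nx Dnr by (simp add: field_simps)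
    moreover have "fE (of_int a) (of_int b) (of_int c) x = of_int F' / of_int Dn ^ 3" using fx Dnr by (simp add: field_simps)
    ultimately have "x3 = (of_int A' / of_int Dn ^ 4) / (4 * (of_int F' / of_int Dn ^ 3))" using x3N by simp
    also have "\<dots> = of_int A' / (4 * of_int Dn * of_int F')" using Dnr F'0
      by (simp add: field_simps power3_eq_cube power4_eq_xxxx)
    also have "\<dots> = of_int A' / (4^(Suc j) * of_int (B*F'))" unfolding Dn_def by (simp add: algebra_simps)
    finally show ?thesis .
  qed
  hence "D2 (Suc j) x3" unfolding D2_def using A'odd ab(2) F'odd by (intro exI[of _ A'] exI[of _ "B*F'"]) simp
  thus ?thesis using on by blast
qed

lemma D2_infinite:
  fixes a b c :: int
  assumes hy: "y0^2 = fE (of_int a) (of_int b) (of_int c) x0" and hD: "D2 j0 x0" and j1: "j0 \<ge> 1"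
  shows "infinite {x. (\<exists>y. y^2 = fE (of_int a) (of_int b) (of_int c) x) \<and> (\<exists>j. D2 j x)}"
proof -
  let ?f = "fE (of_int a) (of_int b) (of_int c)"
  have ex: "\<exists>x y. y^2 = ?f x \<and> D2 (j0+n) x" for n
  proof (induction n)
    case 0 thus ?case using hy hD by auto
  next
    case (Suc n)
    then obtain x y where "y^2 = ?f x" "D2 (j0+n) x" by blast
    from double_D2[OF this] j1 show ?case by auto
  qed
  define g where "g n = (SOME x. \<exists>y. y^2 = ?f x \<and> D2 (j0+n) x)" for n
  have g: "\<exists>y. y^2 = ?f (g n) \<and> D2 (j0+n) (g n)" for n
    unfolding g_def using someI_ex[OF ex[of n]] by blast
  have "inj g"
  proof (rule injI)
    fix m n assume "g m = g n"
    hence "D2 (j0+m) (g n)" "D2 (j0+n) (g n)" using g[of m] g[of n] by auto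
    thus "m = n" using D2_unique by fastforce
  qed
  hence "infinite (range g)" using finite_imageD[of g UNIV] by (auto simp: inj_on_def)
  moreover have "range g \<subseteq> {x. (\<exists>y. y^2 = ?f x) \<and> (\<exists>j. D2 j x)}" using g by blast
  ultimately show ?thesis using finite_subset by blast
qed

lemma pigeon:
  fixes T :: "rat set" and L M \<delta> :: rat
  assumes inf: "infinite T" and bnd: "\<forall>x\<in>T. L \<le> x \<and> x \<le> M" and d: "\<delta> > 0"
  shows "\<exists>x1\<in>T. \<exists>x2\<in>T. x1 \<noteq> x2 \<and> \<bar>x1 - x2\<bar> < \<delta>"
proof -
  let ?h = "\<lambda>x. \<lfloor>x/\<delta>\<rfloor>"
  have "?h ` T \<subseteq> {\<lfloor>L/\<delta>\<rfloor>..\<lfloor>M/\<delta>\<rfloor>}"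
    using bnd d by (auto intro!: floor_mono divide_right_mono)
  hence fin: "finite (?h ` T)" by (rule finite_subset) simp
  have "\<not> inj_on ?h T" using fin inf finite_imageD by blast
  then obtain x1 x2 where x: "x1\<in>T" "x2\<in>T" "x1\<noteq>x2" "?h x1 = ?h x2" unfolding inj_on_def by blast
  have "x1/\<delta> < of_int (?h x1) + 1" "of_int (?h x1) \<le> x1/\<delta>"
       "x2/\<delta> < of_int (?h x2) + 1" "of_int (?h x2) \<le> x2/\<delta>" by linarith+
  hence "\<bar>x1/\<delta> - x2/\<delta>\<bar> < 1" using x(4) by linarith
  hence "\<bar>x1 - x2\<bar>/\<delta> < 1" using d by (simp add: diff_divide_distrib[symmetric] abs_divide)
  hence "\<bar>x1 - x2\<bar> < \<delta>" using d by (simp add: field_simps)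
  thus ?thesis using x by blast
qed




lemma big_slope:
  fixes y1 y2 x1 x2 \<delta> R \<eta> \<kappa> K :: rat
  assumes ne: "x1 \<noteq> x2" and dlt: "\<bar>x1 - x2\<bar> < \<delta>" and d1: "\<delta> \<le> 1"
    and dR1: "R * \<delta> \<le> \<eta>^2" and dR2: "R * \<delta> \<le> \<kappa>" and Rp: "R > 0" and eta: "\<eta> > 0"
    and Kid: "y1^2 - y2^2 = (x1 - x2) * K"
    and Kb: "\<bar>y1\<bar> < \<eta> \<Longrightarrow> \<bar>y2\<bar> < \<eta> \<Longrightarrow> \<kappa> \<le> K"
  shows "R * (x1 - x2)^2 \<le> (y1 + y2)^2 \<or> R * (x1 - x2)^2 \<le> (y1 - y2)^2"
proof (rule ccontr)
  define \<Delta> where "\<Delta> = x1 - x2"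
  assume "\<not> ?thesis"
  hence lp: "(y1 + y2)^2 < R * \<Delta>^2" and lm: "(y1 - y2)^2 < R * \<Delta>^2" unfolding \<Delta>_def by auto
  have dp: "\<Delta>^2 > 0" using ne unfolding \<Delta>_def by simp
  have ad: "\<bar>\<Delta>\<bar> < \<delta>" using dlt unfolding \<Delta>_def .
  have dd: "\<Delta>^2 \<le> \<delta>" 
  proof -
    have "\<Delta>^2 = \<bar>\<Delta>\<bar> * \<bar>\<Delta>\<bar>" by (simp add: power2_eq_square abs_mult_self_eq)
    also have "\<dots> \<le> \<delta> * 1" using ad d1 by (intro mult_mono) auto
    finally show ?thesis by simp
  qed
  have RD: "R * \<Delta>^2 \<le> R * \<delta>" using dd Rp by simp
  show False
  proof (cases "\<bar>y1\<bar> < \<eta> \<and> \<bar>y2\<bar> < \<eta>")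
    case True
    hence K: "\<kappa> \<le> K" using Kb by blast
    have "((y1 + y2)*(y1 - y2))^2 < (R * \<Delta>^2) * (R * \<Delta>^2)"
    proof -
      have "((y1 + y2)*(y1 - y2))^2 = (y1 + y2)^2 * (y1 - y2)^2" by (simp add: power_mult_distrib)
      also have "\<dots> < (R * \<Delta>^2) * (R * \<Delta>^2)"
        using lp lm by (rule mult_strict_mono) (use Rp dp in simp_all)
      finally show ?thesis .
    qed
    moreover have e: "(y1 + y2)*(y1 - y2) = \<Delta> * K"
    proof -
      have "(y1 + y2)*(y1 - y2) = y1^2 - y2^2" by (simp add: power2_eq_square algebra_simps)
      thus ?thesis using Kid unfolding \<Delta>_def by simp
    qed
    moreover have "((y1 + y2)*(y1 - y2))^2 = \<Delta>^2 * K^2" unfolding e by (simp add: power_mult_distrib)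
    moreover have "(R * \<Delta>^2) * (R * \<Delta>^2) = \<Delta>^2 * (R^2 * \<Delta>^2)" by (simp add: power2_eq_square)
    ultimately have "\<Delta>^2 * K^2 < \<Delta>^2 * (R^2 * \<Delta>^2)" by metis
    hence "K^2 < R^2 * \<Delta>^2" using dp by (simp only: mult_less_cancel_left_pos)
    hence "K^2 < (R * \<bar>\<Delta>\<bar>)^2" by (simp add: power_mult_distrib)
    hence "\<bar>K\<bar>^2 < (R * \<bar>\<Delta>\<bar>)^2" by (simp only: power2_abs)
    moreover have "0 \<le> R * \<bar>\<Delta>\<bar>" using Rp by simp
    ultimately have "\<bar>K\<bar> < R * \<bar>\<Delta>\<bar>" by (rule power2_less_imp_less)
    moreover have "R * \<bar>\<Delta>\<bar> \<le> R * \<delta>" using ad Rp by simp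
    ultimately show False using K dR2 abs_ge_self[of K] by linarith
  next
    case False
    hence big: "\<eta> \<le> \<bar>y1\<bar> \<or> \<eta> \<le> \<bar>y2\<bar>" by auto
    have t1: "\<bar>(y1 + y2) + (y1 - y2)\<bar> \<le> \<bar>y1 + y2\<bar> + \<bar>y1 - y2\<bar>" by (rule abs_triangle_ineq)
    have t2: "\<bar>(y1 + y2) - (y1 - y2)\<bar> \<le> \<bar>y1 + y2\<bar> + \<bar>y1 - y2\<bar>" by (rule abs_triangle_ineq4)
    have "(y1 + y2) + (y1 - y2) = 2*y1" "(y1 + y2) - (y1 - y2) = 2*y2" by simp_all
    hence "2*\<bar>y1\<bar> \<le> \<bar>y1 + y2\<bar> + \<bar>y1 - y2\<bar>" "2*\<bar>y2\<bar> \<le> \<bar>y1 + y2\<bar> + \<bar>y1 - y2\<bar>"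
      using t1 t2 by (simp_all add: abs_mult)
    hence "\<eta> \<le> \<bar>y1 + y2\<bar> \<or> \<eta> \<le> \<bar>y1 - y2\<bar>" using big by linarith
    hence "\<eta>^2 \<le> (y1 + y2)^2 \<or> \<eta>^2 \<le> (y1 - y2)^2"
      using eta abs_le_square_iff[of \<eta> "y1 + y2"] abs_le_square_iff[of \<eta> "y1 - y2"] by auto
    thus False using lp lm RD dR1 by linarith
  qed
qed

lemma unbounded:
  fixes a b c :: int and L \<eta> \<kappa> M :: rat
  assumes hy: "ys^2 = fE (of_int a) (of_int b) (of_int c) xs" and hD: "D2 js xs" and j1: "js \<ge> 1"
    and lower: "\<And>x y. y^2 = fE (of_int a) (of_int b) (of_int c) x \<Longrightarrow> L \<le> x"
    and Kb: "\<And>x1 x2. L \<le> x1 \<Longrightarrow> L \<le> x2 \<Longrightarrow> fE (of_int a) (of_int b) (of_int c) x1 < \<eta>^2 \<Longrightarrow>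
               fE (of_int a) (of_int b) (of_int c) x2 < \<eta>^2 \<Longrightarrow>
               \<kappa> \<le> x1^2 + x1*x2 + x2^2 + of_int a*(x1+x2) + of_int b"
    and eta: "\<eta> > 0" and kap: "\<kappa> > 0"
  shows "\<exists>x y. y^2 = fE (of_int a) (of_int b) (of_int c) x \<and> M < x"
proof (rule ccontr)
  let ?f = "fE (of_int a) (of_int b) (of_int c)"
  assume "\<not> ?thesis"
  hence H: "\<And>x y. y^2 = ?f x \<Longrightarrow> x \<le> M" by (meson not_less)
  define T where "T = {x. (\<exists>y. y^2 = ?f x) \<and> (\<exists>j. D2 j x)}"
  have inf: "infinite T" unfolding T_def by (rule D2_infinite[OF hy hD j1])
  have bnd: "\<forall>x\<in>T. L \<le> x \<and> x \<le> M" unfolding T_def using lower H by blast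
  define R :: rat where "R = 3*\<bar>M\<bar> + \<bar>of_int a\<bar> + 1"
  have Rp: "R > 0" unfolding R_def by simp
  define \<delta> where "\<delta> = min 1 (min (\<eta>^2/R) (\<kappa>/R))"
  have dp: "\<delta> > 0" unfolding \<delta>_def using Rp eta kap by simp
  have d1: "\<delta> \<le> 1" unfolding \<delta>_def by simp
  have dR1: "R * \<delta> \<le> \<eta>^2"
  proof -
    have "\<delta> \<le> \<eta>^2/R" unfolding \<delta>_def by simp
    thus ?thesis using Rp by (simp add: field_simps)
  qed
  have dR2: "R * \<delta> \<le> \<kappa>"
  proof -
    have "\<delta> \<le> \<kappa>/R" unfolding \<delta>_def by simp
    thus ?thesis using Rp by (simp add: field_simps)
  qed
  obtain x1 x2 where x: "x1\<in>T" "x2\<in>T" "x1 \<noteq> x2" "\<bar>x1 - x2\<bar> < \<delta>" using pigeon[OF inf bnd dp] by blast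
  obtain y1 where y1: "y1^2 = ?f x1" using x(1) unfolding T_def by blast
  obtain y2 where y2: "y2^2 = ?f x2" using x(2) unfolding T_def by blast
  define K where "K = x1^2 + x1*x2 + x2^2 + of_int a*(x1+x2) + of_int b"
  have Kid: "y1^2 - y2^2 = (x1 - x2) * K" unfolding y1 y2 K_def fE_def
    by (simp add: algebra_simps power2_eq_square power3_eq_cube)
  have Kb': "\<kappa> \<le> K" if "\<bar>y1\<bar> < \<eta>" "\<bar>y2\<bar> < \<eta>"
  proof -
    have "\<bar>y1\<bar>^2 < \<eta>^2" "\<bar>y2\<bar>^2 < \<eta>^2" using power_strict_mono[OF that(1) abs_ge_zero, of 2] power_strict_mono[OF that(2) abs_ge_zero, of 2] by auto
    hence "y1^2 < \<eta>^2" "y2^2 < \<eta>^2" by simp_all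
    thus ?thesis unfolding K_def using Kb[of x1 x2] lower[OF y1] lower[OF y2] y1 y2 by simp
  qed
  have bs: "R * (x1 - x2)^2 \<le> (y1 - (-y2))^2 \<or> R * (x1 - x2)^2 \<le> (y1 - y2)^2"
    using big_slope[OF x(3) x(4) d1 dR1 dR2 Rp eta Kid Kb'] by simp
  then obtain y2' where y2': "y2'^2 = ?f x2" "R * (x1 - x2)^2 \<le> (y1 - y2')^2"
    using y2 by (metis power2_minus)
  define s where "s = (y1 - y2')/(x1 - x2)"
  define x3 where "x3 = s^2 - of_int a - x1 - x2"
  have on: "(s*(x1 - x3) - y1)^2 = ?f x3" using chord[OF y1 y2'(1) x(3)] unfolding s_def x3_def by simp
  have "R \<le> s^2"
  proof -
    have "(x1 - x2)^2 > 0" using x(3) by simp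
    hence "R \<le> (y1 - y2')^2 / (x1 - x2)^2" using y2'(2) by (simp add: pos_le_divide_eq)
    thus ?thesis unfolding s_def by (simp add: power_divide)
  qed
  moreover have "x1 \<le> M" "x2 \<le> M" using bnd x by auto
  ultimately have "M < x3" unfolding x3_def R_def by linarith
  with H[OF on] show False by simp
qed




lemma quot_props:
  fixes z :: rat
  assumes q: "quotient_of z = (r, s)" and z: "1/2 < z" "z < 2" "z \<noteq> 1"
  shows "minpair r s \<and> z = of_int r / of_int s \<and> cmin r s = 13 - 6*(z + 1/z)"
proof -
  have zd: "z = of_int r / of_int s" using quotient_of_div[OF q] .
  have sp: "s > 0" using quotient_of_denom_pos[OF q] .
  have cop: "coprime r s" using quotient_of_coprime[OF q] .
  have sr: "(of_int s::rat) > 0" using sp by simp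
  have "of_int s < 2 * (of_int r::rat)" using z(1) sr unfolding zd by (simp add: field_simps)
  hence h1: "s < 2*r" by linarith
  have "of_int r < 2 * (of_int s::rat)" using z(2) sr unfolding zd by (simp add: field_simps)
  hence h2: "r < 2*s" by linarith
  have "of_int r \<noteq> (of_int s::rat)" using z(3) sr unfolding zd by auto
  hence h3: "r \<noteq> s" by simp
  have rs2: "r \<ge> 2 \<and> s \<ge> 2" using h1 h2 h3 sp by linarith
  have rp: "(of_int r::rat) > 0" using rs2 by simp
  have "cmin r s = 13 - 6*(z + 1/z)"
    unfolding cmin_def zd using rp sr by (simp add: field_simps power2_eq_square)
  thus ?thesis using rs2 cop zd unfolding minpair_def by simp
qed

lemma vbounds:
  fixes v y :: rat
  assumes "v + 1/v = y" "2 < y" "y < 5/2"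
  shows "1/2 < v \<and> v < 2 \<and> v \<noteq> 1"
proof -
  have v0: "v \<noteq> 0" using assms by auto
  have vp: "v > 0"
  proof (rule ccontr)
    assume "\<not> v > 0" hence "v < 0" using v0 by simp
    hence "v + 1/v < 0" by (simp add: add_neg_neg)
    thus False using assms by simp
  qed
  have e: "v*v + 1 = y*v" using assms(1) v0 by (simp add: field_simps)
  have "(v - 2)*(2*v - 1) = 2*v*v - 5*v + 2" by (simp add: algebra_simps)
  also have "\<dots> = (2*y - 5)*v" using e by (simp add: algebra_simps)
  also have "\<dots> < 0" using assms(3) vp by (simp add: mult_neg_pos)
  finally have n: "(v - 2)*(2*v - 1) < 0" .
  have "v < 2"
  proof (rule ccontr)
    assume "\<not> v < 2" hence "0 \<le> (v - 2)*(2*v - 1)" by (intro mult_nonneg_nonneg) auto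
    thus False using n by simp
  qed
  moreover have "1/2 < v"
  proof (rule ccontr)
    assume "\<not> 1/2 < v" hence "0 \<le> (v - 2)*(2*v - 1)" by (intro mult_nonpos_nonpos) auto
    thus False using n by simp
  qed
  moreover have "v \<noteq> 1" using assms by auto
  ultimately show ?thesis by simp
qed

lemma final_step:
  fixes u v :: rat and k :: rat
  assumes u: "1/2 < u" "u < 2" "u \<noteq> 1"
    and rel: "v + 1/v = k*(u + 1/u) - 13*(k-1)/6"
    and y: "2 < v + 1/v" "v + 1/v < 5/2"
    and qu: "quotient_of u = (r, s)" and qv: "quotient_of v = (p, q)"
  shows "minpair r s \<and> minpair p q \<and> k * cmin r s = cmin p q"
proof -
  have vb: "1/2 < v \<and> v < 2 \<and> v \<noteq> 1" using vbounds[OF refl y] .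
  have A: "minpair r s" "cmin r s = 13 - 6*(u + 1/u)" using quot_props[OF qu u] by auto
  have B: "minpair p q" "cmin p q = 13 - 6*(v + 1/v)" using quot_props[OF qv] vb by auto
  have "k * cmin r s = cmin p q" unfolding A(2) B(2) rel by (simp add: field_simps)
  thus ?thesis using A B by simp
qed

lemma infinite_if_unbounded:
  fixes S :: "(int \<times> int) set"
  assumes "\<And>N. \<exists>r s. (r, s) \<in> S \<and> N < s"
  shows "infinite S"
proof
  assume fin: "finite S"
  define B where "B = Max (insert 0 (snd ` S))"
  have "\<forall>x\<in>S. snd x \<le> B" unfolding B_def using fin by (auto intro: Max_ge)
  moreover obtain r s where "(r, s) \<in> S" "B < s" using assms by blast
  ultimately show False by fastforce
qed




abbreviation f2 where "f2 \<equiv> fE (of_int 601) (of_int 102144) (of_int 7225344)"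

lemma f2_factor: "f2 x = (x + 384) * (x^2 + 217*x + 18816)"
  unfolding fE_def by (simp add: algebra_simps power2_eq_square power3_eq_cube)

lemma f2_g: "x^2 + 217*x + 18816 \<ge> (7043::rat)"
proof -
  have "x^2 + 217*x + 18816 = (x + 217/2)^2 + 28175/4" by (simp add: power2_eq_square algebra_simps)
  moreover have "(x + 217/2)^2 \<ge> 0" by simp
  ultimately show ?thesis by linarith
qed

lemma f2_lower: "y^2 = f2 x \<Longrightarrow> -384 \<le> x"
proof (rule ccontr)
  assume h: "y^2 = f2 x" "\<not> -384 \<le> x"
  hence "x + 384 < 0" by simp
  moreover have "x^2 + 217*x + 18816 > 0" using f2_g[of x] by linarith
  ultimately have "f2 x < 0" unfolding f2_factor by (simp add: mult_neg_pos)
  moreover have "y^2 \<ge> 0" by simp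
  ultimately show False using h(1) by simp
qed

lemma f2_K:
  assumes "-384 \<le> x1" "-384 \<le> x2" "f2 x1 < 1^2" "f2 x2 < 1^2"
  shows "1 \<le> x1^2 + x1*x2 + x2^2 + of_int 601*(x1+x2) + of_int 102144"
proof -
  have le: "x \<le> -383" if "-384 \<le> x" "f2 x < 1" for x :: rat
  proof (rule ccontr)
    assume "\<not> x \<le> -383" hence "x + 384 \<ge> 1" by simp
    hence "(x + 384) * (x^2 + 217*x + 18816) \<ge> 1 * 7043" using f2_g[of x] by (intro mult_mono) auto
    thus False using that(2) unfolding f2_factor by simp
  qed
  define e1 where "e1 = x1 + 384"
  define e2 where "e2 = x2 + 384"
  have f1: "f2 x1 < 1" "f2 x2 < 1" using assms(3,4) by simp_all
  have "x1 \<le> -383" "x2 \<le> -383" using le[OF assms(1) f1(1)] le[OF assms(2) f1(2)] by simp_all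
  hence e: "0 \<le> e1" "e1 \<le> 1" "0 \<le> e2" "e2 \<le> 1" using assms(1,2) unfolding e1_def e2_def by simp_all
  have "x1^2 + x1*x2 + x2^2 + of_int 601*(x1+x2) + of_int 102144 = 82944 - 551*(e1+e2) + (e1*e1 + e1*e2 + e2*e2)"
    unfolding e1_def e2_def by (simp add: power2_eq_square algebra_simps)
  moreover have "1 \<le> 82944 - 551*(e1+e2) + (e1*e1 + e1*e2 + e2*e2)"
  proof -
    obtain Q where Q: "Q = e1*e1 + e1*e2 + e2*e2" by simp
    have "Q \<ge> 0" using e unfolding Q by simp
    hence "1 \<le> 82944 - 551*(e1+e2) + Q" using e by (simp add: algebra_simps)
    thus ?thesis unfolding Q .
  qed
  ultimately show ?thesis by simp
qed

lemma f2_start: "(-165699495/85184)^2 = f2 (-527199/1936)" unfolding fE_def by (simp add: power_divide)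
lemma f2_startD: "D2 2 (-527199/1936)" unfolding D2_def by (intro exI[of _ "-527199"] exI[of _ 121]) simp

lemma f2_unbounded: "\<exists>x y. y^2 = f2 x \<and> M < x"
  using unbounded[where ys = "-165699495/85184" and xs = "-527199/1936" and js = 2 and L = "-384" and \<eta> = 1 and \<kappa> = 1 and M = M,
     OF f2_start f2_startD _ f2_lower f2_K] by simp

lemma k2_point:
  assumes hy: "Y^2 = f2 X" and hX: "1344 < X"
  shows "\<exists>r s. minpair r s \<and> (\<exists>p q. minpair p q \<and> 2 * cmin r s = cmin p q) \<and> X/672 \<le> of_int s"
proof -
  define t where "t = X/224"
  define W where "W = Y/224"
  have t6: "t > 6" unfolding t_def using hX by simp
  have t0: "t \<noteq> 0" using t6 by simp
  have hW: "W^2 = 224*t^3 + 601*t^2 + 456*t + 144"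
    using hy unfolding W_def t_def fE_def by (simp add: power_divide field_simps power2_eq_square power3_eq_cube)
  define u where "u = 4/3 + 1/t"
  define w where "w = W/t^2"
  define g where "g = 12*u^2 - 13*u + 12"
  have u0: "u > 0" unfolding u_def using t6 by (simp add: add_pos_pos)
  have hw: "w^2 = g^2 - 144*u^2"
  proof -
    have "w^2 = (224*t^3 + 601*t^2 + 456*t + 144)/t^4" unfolding w_def using hW by (simp add: power_divide power_mult_distrib flip: power_mult)
    also have "\<dots> = g^2 - 144*u^2" unfolding g_def u_def using t0
      by (simp add: field_simps power2_eq_square power3_eq_cube power4_eq_xxxx)
    finally show ?thesis .
  qed
  define v where "v = (g + w)/(12*u)"
  have quad: "6*u*v^2 - g*v + 6*u = 0"
  proof -
    have "6*u*v^2 - g*v + 6*u = (w^2 - g^2 + 144*u^2)/(24*u)"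
      unfolding v_def using u0 by (simp add: field_simps power2_eq_square)
    thus ?thesis using hw by simp
  qed
  have v0: "v \<noteq> 0" using quad u0 by auto
  have rel: "v + 1/v = 2*(u + 1/u) - 13*(2-1)/6"
  proof -
    have "v + 1/v = g/(6*u)" using quad u0 v0 by (simp add: field_simps power2_eq_square)
    thus ?thesis unfolding g_def using u0 by (simp add: field_simps power2_eq_square)
  qed
  have ub: "4/3 < u" "u < 3/2" unfolding u_def using t6 by (simp_all add: field_simps)
  have x1: "25/12 < u + 1/u"
  proof -
    have "u + 1/u - 25/12 = (u - 4/3)*(u - 3/4)/u" using u0 by (simp add: field_simps)
    moreover have "(u - 4/3)*(u - 3/4)/u > 0" using ub u0 by simp
    ultimately show ?thesis by simp
  qed
  have x2: "u + 1/u < 13/6"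
  proof -
    have "u + 1/u - 13/6 = (u - 3/2)*(u - 2/3)/u" using u0 by (simp add: field_simps)
    moreover have "(u - 3/2)*(u - 2/3)/u < 0" using ub u0 by (simp add: mult_neg_pos divide_neg_pos)
    ultimately show ?thesis by simp
  qed
  have y: "2 < v + 1/v" "v + 1/v < 5/2" unfolding rel using x1 x2 by simp_all
  obtain r s where qu: "quotient_of u = (r, s)" by (cases "quotient_of u") auto
  obtain p q where qv: "quotient_of v = (p, q)" by (cases "quotient_of v") auto
  have fin: "minpair r s \<and> minpair p q \<and> 2 * cmin r s = cmin p q"
    using final_step[of u v 2, OF _ _ _ rel y qu qv] ub by simp
  have ud: "u = of_int r / of_int s" using quotient_of_div[OF qu] .
  have sp: "(of_int s::rat) > 0" using quotient_of_denom_pos[OF qu] by simp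
  have "of_int (3*r - 4*s) = 3 * of_int s * (u - 4/3)" unfolding ud using sp by (simp add: field_simps)
  also have "\<dots> > 0" using sp ub by simp
  finally have "3*r - 4*s \<ge> 1" by linarith
  hence "(1::rat) \<le> 3 * of_int s * (u - 4/3)"
    using \<open>of_int (3*r - 4*s) = 3 * of_int s * (u - 4/3)\<close> by (metis of_int_1 of_int_le_iff)
  also have "\<dots> = 3 * of_int s / t" unfolding u_def by simp
  finally have "t \<le> 3 * of_int s" using t6 by (simp add: field_simps)
  hence "X/672 \<le> of_int s" unfolding t_def by simp
  thus ?thesis using fin by blast
qed

lemma k2_infinite: "infinite {(r, s). minpair r s \<and> (\<exists>p q. minpair p q \<and> 2 * cmin r s = cmin p q)}"
proof (rule infinite_if_unbounded)
  fix N :: int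
  obtain X Y where h: "Y^2 = f2 X" "max 1344 (672 * (of_int \<bar>N\<bar> + 1)) < X" using f2_unbounded by blast
  then obtain r s where rs: "minpair r s" "\<exists>p q. minpair p q \<and> 2 * cmin r s = cmin p q" "X/672 \<le> of_int s"
    using k2_point[OF h(1)] by fastforce
  have "of_int \<bar>N\<bar> + 1 < X/672" using h(2) by simp
  hence "(of_int N::rat) < of_int s" using rs(3) by linarith
  hence "N < s" by simp
  thus "\<exists>r s. (r, s) \<in> {(r, s). minpair r s \<and> (\<exists>p q. minpair p q \<and> 2 * cmin r s = cmin p q)} \<and> N < s"
    using rs by blast
qed




abbreviation f3 where "f3 \<equiv> fE (of_int 0) (of_int (-40203)) (of_int 165096198)"

lemma f3_factor: "f3 x = (x + 573) * (x^2 - 573*x + 288126)"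
  unfolding fE_def by (simp add: algebra_simps power2_eq_square power3_eq_cube)

lemma f3_g: "x^2 - 573*x + 288126 \<ge> (206043::rat)"
proof -
  have "x^2 - 573*x + 288126 = (x - 573/2)^2 + 824175/4" by (simp add: power2_eq_square algebra_simps)
  moreover have "(x - 573/2)^2 \<ge> 0" by simp
  ultimately show ?thesis by linarith
qed

lemma f3_lower: "y^2 = f3 x \<Longrightarrow> -573 \<le> x"
proof (rule ccontr)
  assume h: "y^2 = f3 x" "\<not> -573 \<le> x"
  hence "x + 573 < 0" by simp
  moreover have "x^2 - 573*x + 288126 > 0" using f3_g[of x] by linarith
  ultimately have "f3 x < 0" unfolding f3_factor by (simp add: mult_neg_pos)
  moreover have "y^2 \<ge> 0" by simp
  ultimately show False using h(1) by simp
qed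

lemma f3_K:
  assumes "-573 \<le> x1" "-573 \<le> x2" "f3 x1 < 1^2" "f3 x2 < 1^2"
  shows "1 \<le> x1^2 + x1*x2 + x2^2 + of_int 0*(x1+x2) + of_int (-40203)"
proof -
  have le: "x \<le> -572" if "-573 \<le> x" "f3 x < 1" for x :: rat
  proof (rule ccontr)
    assume "\<not> x \<le> -572" hence "x + 573 \<ge> 1" by simp
    hence "(x + 573) * (x^2 - 573*x + 288126) \<ge> 1 * 206043" using f3_g[of x] by (intro mult_mono) auto
    thus False using that(2) unfolding f3_factor by simp
  qed
  define e1 where "e1 = x1 + 573"
  define e2 where "e2 = x2 + 573"
  have f1: "f3 x1 < 1" "f3 x2 < 1" using assms(3,4) by simp_all
  have "x1 \<le> -572" "x2 \<le> -572" using le[OF assms(1) f1(1)] le[OF assms(2) f1(2)] by simp_all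
  hence e: "0 \<le> e1" "e1 \<le> 1" "0 \<le> e2" "e2 \<le> 1" using assms(1,2) unfolding e1_def e2_def by simp_all
  have "x1^2 + x1*x2 + x2^2 + of_int 0*(x1+x2) + of_int (-40203) = 944784 - 1719*(e1+e2) + (e1*e1 + e1*e2 + e2*e2)"
    unfolding e1_def e2_def by (simp add: power2_eq_square algebra_simps)
  moreover have "1 \<le> 944784 - 1719*(e1+e2) + (e1*e1 + e1*e2 + e2*e2)"
  proof -
    obtain Q where Q: "Q = e1*e1 + e1*e2 + e2*e2" by simp
    have "Q \<ge> 0" using e unfolding Q by simp
    hence "1 \<le> 944784 - 1719*(e1+e2) + Q" using e by (simp add: algebra_simps)
    thus ?thesis unfolding Q .
  qed
  ultimately show ?thesis by simp
qed

lemma f3_start: "(849771/64)^2 = f3 (4521/16)" unfolding fE_def by (simp add: power_divide)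
lemma f3_startD: "D2 2 (4521/16)" unfolding D2_def by (intro exI[of _ 4521] exI[of _ 1]) simp

lemma f3_unbounded: "\<exists>x y. y^2 = f3 x \<and> M < x"
  using unbounded[where ys = "849771/64" and xs = "4521/16" and js = 2 and L = "-573" and \<eta> = 1 and \<kappa> = 1 and M = M,
     OF f3_start f3_startD _ f3_lower f3_K] by simp

lemma chain:
  fixes d \<alpha> \<beta> \<gamma> \<delta> m Z :: rat
  assumes hZ: "Z^2 = 8*d*m^3 + (4*\<alpha>^2 - 16*d*\<beta>)*m^2 + (4*\<alpha>*\<gamma> - 8*d*\<delta>)*m + \<gamma>^2"
    and m0: "m \<noteq> 0" and d0: "d \<noteq> 0"
    and t_def: "t = (Z - 2*\<alpha>*m - \<gamma>)/(4*d*m)"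
  shows "2*d*m*t^2 + (2*\<alpha>*m+\<gamma>)*t = m^2 - 2*\<beta>*m - \<delta>"
    and "(m - (d*t^2+\<alpha>*t+\<beta>))^2 = (d*t^2+\<alpha>*t+\<beta>)^2 + \<gamma>*t + \<delta>"
proof -
  have Zt: "Z = 4*d*m*t + 2*\<alpha>*m + \<gamma>" unfolding t_def using m0 d0 by (simp add: field_simps)
  have "8*d*m*(2*d*m*t^2 + (2*\<alpha>*m+\<gamma>)*t) = 8*d*m*(m^2 - 2*\<beta>*m - \<delta>)"
  proof -
    have "8*d*m*(2*d*m*t^2 + (2*\<alpha>*m+\<gamma>)*t) = (4*d*m*t + 2*\<alpha>*m + \<gamma>)^2 - (4*\<alpha>^2*m^2 + 4*\<alpha>*\<gamma>*m + \<gamma>^2)"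
      by (simp add: power2_eq_square algebra_simps)
    also have "\<dots> = 8*d*m*(m^2 - 2*\<beta>*m - \<delta>)" unfolding Zt[symmetric] hZ
      by (simp add: power2_eq_square power3_eq_cube algebra_simps)
    finally show ?thesis .
  qed
  thus q: "2*d*m*t^2 + (2*\<alpha>*m+\<gamma>)*t = m^2 - 2*\<beta>*m - \<delta>" using m0 d0 by simp
  show "(m - (d*t^2+\<alpha>*t+\<beta>))^2 = (d*t^2+\<alpha>*t+\<beta>)^2 + \<gamma>*t + \<delta>"
  proof -
    have "(m - (d*t^2+\<alpha>*t+\<beta>))^2 = (d*t^2+\<alpha>*t+\<beta>)^2 + (m^2 - 2*m*(d*t^2+\<alpha>*t+\<beta>))"
      by (simp add: power2_eq_square algebra_simps)
    also have "m^2 - 2*m*(d*t^2+\<alpha>*t+\<beta>) = \<gamma>*t + \<delta>" using q by (simp add: power2_eq_square algebra_simps)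
    finally show ?thesis by simp
  qed
qed

lemma t_big:
  fixes d \<alpha> \<beta> \<gamma> \<delta> m t T :: rat
  assumes q: "2*d*m*t^2 + (2*\<alpha>*m+\<gamma>)*t = m^2 - 2*\<beta>*m - \<delta>"
    and c: "\<beta> \<le> 0" "\<delta> \<le> 0" "0 \<le> d" "2*d \<le> 5" "\<bar>2*\<alpha>\<bar> \<le> 26" "\<bar>\<gamma>\<bar> \<le> 641"
    and T1: "1 \<le> T" and mb: "672*T^2 < m"
  shows "T \<le> \<bar>t\<bar>"
proof (rule ccontr)
  assume "\<not> T \<le> \<bar>t\<bar>" hence tT: "\<bar>t\<bar> < T" by simp
  have T2: "T \<le> T^2" using T1 by (simp add: power2_eq_square)
  have m1: "m \<ge> 1" using mb T1 T2 by simp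
  have mp: "m > 0" using m1 by simp
  have "\<beta>*m \<le> 0" using c(1) mp by (simp add: mult_nonpos_nonneg)
  hence "m^2 \<le> m^2 - 2*\<beta>*m - \<delta>" using c(2) by linarith
  also have "\<dots> = 2*d*m*t^2 + (2*\<alpha>*m+\<gamma>)*t" using q by simp
  also have "\<dots> \<le> 2*d*m*t^2 + \<bar>(2*\<alpha>*m+\<gamma>)*t\<bar>" by simp
  also have "\<dots> \<le> 5*m*T^2 + (26*m + 641*m)*T"
  proof -
    have "t^2 \<le> T^2" using tT by (simp add: abs_le_square_iff[symmetric] less_imp_le)
    hence a1: "2*d*m*t^2 \<le> 5*m*T^2" using c(3,4) mp by (intro mult_mono) auto
    have "\<bar>2*\<alpha>*m+\<gamma>\<bar> \<le> \<bar>2*\<alpha>\<bar>*m + \<bar>\<gamma>\<bar>" using mp abs_triangle_ineq[of "2*\<alpha>*m" \<gamma>] by (simp add: abs_mult)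
    also have "\<dots> \<le> 26*m + 641*m" using c(5,6) m1 mp by (intro add_mono mult_right_mono) auto
    finally have "\<bar>2*\<alpha>*m+\<gamma>\<bar> \<le> 26*m + 641*m" .
    hence a2: "\<bar>(2*\<alpha>*m+\<gamma>)*t\<bar> \<le> (26*m + 641*m)*T" unfolding abs_mult using tT mp by (intro mult_mono) auto
    show ?thesis using a1 a2 by simp
  qed
  also have "\<dots> \<le> 672*m*T^2" using T2 mp by (simp add: algebra_simps)
  finally have "m*m \<le> m*(672*T^2)" by (simp add: power2_eq_square algebra_simps)
  hence "m \<le> 672*T^2" using mp by simp
  thus False using mb by simp
qed

lemma k3_Zrel:
  fixes x :: rat
  shows "((169/10989))^2 * f3 x = 8*(407/169)*((169/7326)*x + (-10952508229/404514858))^3 + (4*(-67297/5291)^2 - 16*(407/169)*(-1605905505/67419143))*((169/7326)*x + (-10952508229/404514858))^2 + (4*(-67297/5291)*(-17576389352340/27439591201) - 8*(407/169)*(-2210759882718094656/4545340842854449))*((169/7326)*x + (-10952508229/404514858)) + (-17576389352340/27439591201)^2"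
  unfolding fE_def by (simp add: power2_eq_square power3_eq_cube field_simps)

lemma k3_Qrel:
  fixes t :: rat
  assumes "t \<noteq> 0"
  shows "((407/169)*t^2 + (-67297/5291)*t + (-1605905505/67419143))^2 + (-17576389352340/27439591201)*t + (-2210759882718094656/4545340842854449) = t^4 * ((9*(8/13 + 1/t)^2 - 13*(8/13 + 1/t) + 9)^2 - 36*(8/13 + 1/t)^2)"
  using assms by (simp add: field_simps power2_eq_square power3_eq_cube power4_eq_xxxx)

lemma k3_point:
  assumes hy: "y^2 = f3 x" and T1: "70 \<le> T" and hx: "7326/169 * (672*T^2 + 28) < x"
  shows "\<exists>r s. minpair r s \<and> (\<exists>p q. minpair p q \<and> 3 * cmin r s = cmin p q) \<and> T/13 \<le> of_int s"
proof -
  define m where "m = (169/7326)*x + (-10952508229/404514858)"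
  define Z where "Z = (169/10989)*y"
  have mb: "672*T^2 < m" unfolding m_def using hx by (simp add: field_simps)
  have "0 \<le> 672*T^2" by simp
  hence m0: "m \<noteq> 0" using mb by linarith
  have "Z^2 = (169/10989)^2 * f3 x" unfolding Z_def power_mult_distrib hy by (rule refl)
  also have "\<dots> = 8*(407/169)*m^3 + (4*(-67297/5291)^2 - 16*(407/169)*(-1605905505/67419143))*m^2 + (4*(-67297/5291)*(-17576389352340/27439591201) - 8*(407/169)*(-2210759882718094656/4545340842854449))*m + (-17576389352340/27439591201)^2"
    unfolding m_def by (rule k3_Zrel)
  finally have hZ: "Z^2 = 8*(407/169)*m^3 + (4*(-67297/5291)^2 - 16*(407/169)*(-1605905505/67419143))*m^2 + (4*(-67297/5291)*(-17576389352340/27439591201) - 8*(407/169)*(-2210759882718094656/4545340842854449))*m + (-17576389352340/27439591201)^2" .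
  define t where "t = (Z - 2*(-67297/5291)*m - (-17576389352340/27439591201))/(4*(407/169)*m)"
  have d0: "(407/169::rat) \<noteq> 0" by simp
  have q: "2*(407/169)*m*t^2 + (2*(-67297/5291)*m+(-17576389352340/27439591201))*t = m^2 - 2*(-1605905505/67419143)*m - (-2210759882718094656/4545340842854449)"
    using chain(1)[OF hZ m0 d0 t_def] .
  have yq: "(m - ((407/169)*t^2+(-67297/5291)*t+(-1605905505/67419143)))^2 = ((407/169)*t^2+(-67297/5291)*t+(-1605905505/67419143))^2 + (-17576389352340/27439591201)*t + (-2210759882718094656/4545340842854449)"
    using chain(2)[OF hZ m0 d0 t_def] .
  have T1': "1 \<le> T" using T1 by simp
  have tT: "T \<le> \<bar>t\<bar>" by (rule t_big[OF q _ _ _ _ _ _ T1' mb]) simp_all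
  have t70: "70 \<le> \<bar>t\<bar>" using tT T1 by simp
  have t0: "t \<noteq> 0" using t70 by auto
  define u where "u = 8/13 + 1/t"
  define w where "w = (m - ((407/169)*t^2+(-67297/5291)*t+(-1605905505/67419143)))/t^2"
  define g where "g = 9*u^2 - 13*u + 9"
  have hw: "w^2 = g^2 - 36*u^2"
  proof -
    have "w^2 = (((407/169)*t^2+(-67297/5291)*t+(-1605905505/67419143))^2 + (-17576389352340/27439591201)*t + (-2210759882718094656/4545340842854449))/t^4" unfolding w_def yq[symmetric]
      by (simp add: power_divide flip: power_mult)
    also have "\<dots> = g^2 - 36*u^2" unfolding k3_Qrel[OF t0] g_def u_def using t0 by simp
    finally show ?thesis .
  qed
  have "1/\<bar>t\<bar> \<le> 1/70" using t70 by (intro divide_left_mono) auto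
  hence it: "\<bar>1/t\<bar> \<le> 1/70" by (simp add: abs_divide)
  hence "1/t \<le> 1/70 \<and> -(1/t) \<le> 1/70" by (simp only: abs_le_iff)
  hence it2: "-1/70 \<le> 1/t" "1/t \<le> 1/70" by linarith+
  have ub: "3/5 \<le> u" "u \<le> 7/11" unfolding u_def using it2 by linarith+
  have u0: "u > 0" using ub by simp
  define v where "v = (g + w)/(6*u)"
  have quad: "3*u*v^2 - g*v + 3*u = 0"
  proof -
    have "3*u*v^2 - g*v + 3*u = (w^2 - g^2 + 36*u^2)/(12*u)"
      unfolding v_def using u0 by (simp add: field_simps power2_eq_square)
    thus ?thesis using hw by simp
  qed
  have v0: "v \<noteq> 0" using quad u0 by auto
  have rel: "v + 1/v = 3*(u + 1/u) - 13*(3-1)/6"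
  proof -
    have "v + 1/v = g/(3*u)" using quad u0 v0 by (simp add: field_simps power2_eq_square)
    thus ?thesis unfolding g_def using u0 by (simp add: field_simps power2_eq_square)
  qed
  have x1: "170/77 \<le> u + 1/u"
  proof -
    have "u + 1/u - 170/77 = (7*u - 11)*(11*u - 7)/(77*u)" using u0 by (simp add: field_simps)
    moreover have "(7*u - 11)*(11*u - 7) \<ge> 0" using ub by (intro mult_nonpos_nonpos) auto
    hence "(7*u - 11)*(11*u - 7)/(77*u) \<ge> 0" using u0 by (intro divide_nonneg_pos) auto
    ultimately show ?thesis by linarith
  qed
  have x2: "u + 1/u \<le> 34/15"
  proof -
    have "u + 1/u - 34/15 = (5*u - 3)*(3*u - 5)/(15*u)" using u0 by (simp add: field_simps)
    moreover have "(5*u - 3)*(3*u - 5) \<le> 0" using ub by (intro mult_nonneg_nonpos) auto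
    hence "(5*u - 3)*(3*u - 5)/(15*u) \<le> 0" using u0 by (intro divide_nonpos_pos) auto
    ultimately show ?thesis by linarith
  qed
  have y: "2 < v + 1/v" "v + 1/v < 5/2" unfolding rel using x1 x2 by simp_all
  obtain r s where qu: "quotient_of u = (r, s)" by (cases "quotient_of u") auto
  obtain p q where qv: "quotient_of v = (p, q)" by (cases "quotient_of v") auto
  have ub2: "1/2 < u" "u < 2" "u \<noteq> 1" using ub by simp_all
  have fin: "minpair r s \<and> minpair p q \<and> 3 * cmin r s = cmin p q"
    using final_step[of u v 3, OF ub2 rel y qu qv] .
  have ud: "u = of_int r / of_int s" using quotient_of_div[OF qu] .
  have sp: "(of_int s::rat) > 0" using quotient_of_denom_pos[OF qu] by simp
  have e: "of_int (13*r - 8*s) = 13 * of_int s / t"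
  proof -
    have "of_int (13*r - 8*s) = 13 * of_int s * (u - 8/13)" unfolding ud using sp by (simp add: field_simps)
    thus ?thesis unfolding u_def by simp
  qed
  have "13*r - 8*s \<noteq> 0"
  proof
    assume "13*r - 8*s = 0"
    hence "13 * of_int s / t = (0::rat)" using e by simp
    thus False using sp t0 by simp
  qed
  hence "1 \<le> \<bar>13*r - 8*s\<bar>" by linarith
  hence "(1::rat) \<le> \<bar>of_int (13*r - 8*s)\<bar>" by (metis of_int_1 of_int_abs of_int_le_iff)
  hence "1 \<le> 13 * of_int s / \<bar>t\<bar>" unfolding e using sp by (simp add: abs_divide)
  hence "\<bar>t\<bar> \<le> 13 * of_int s" using t0 by (simp add: field_simps)
  hence "T/13 \<le> of_int s" using tT by simp
  thus ?thesis using fin by blast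
qed

lemma k3_infinite: "infinite {(r, s). minpair r s \<and> (\<exists>p q. minpair p q \<and> 3 * cmin r s = cmin p q)}"
proof (rule infinite_if_unbounded)
  fix N :: int
  define T :: rat where "T = 13 * (of_int \<bar>N\<bar> + 1) + 70"
  have T1: "70 \<le> T" unfolding T_def by simp
  obtain x y where h: "y^2 = f3 x" "7326/169 * (672*T^2 + 28) < x" using f3_unbounded by blast
  then obtain r s where rs: "minpair r s" "\<exists>p q. minpair p q \<and> 3 * cmin r s = cmin p q" "T/13 \<le> of_int s"
    using k3_point[OF h(1) T1 h(2)] by blast
  have "of_int \<bar>N\<bar> + 1 < T/13" unfolding T_def by simp
  hence "(of_int N::rat) < of_int s" using rs(3) by linarith
  hence "N < s" by simp
  thus "\<exists>r s. (r, s) \<in> {(r, s). minpair r s \<and> (\<exists>p q. minpair p q \<and> 3 * cmin r s = cmin p q)} \<and> N < s"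
    using rs by blast
qed


theorem proposition8p3:
  shows "infinite {(r, s). minpair r s \<and> (\<exists>p q. minpair p q \<and> 2 * cmin r s = cmin p q)}
       \<and> infinite {(r, s). minpair r s \<and> (\<exists>p q. minpair p q \<and> 3 * cmin r s = cmin p q)}"
  using k2_infinite k3_infinite by blast

end
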